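(* Let $S\le T_n$ be a transformation monoid and $G$ the normalizer of $S$ in $S_n$. If $a\in S$ is $\mathcal H$-related in $SG$ to an idempotent $e$ of $SG$, then $e\in S$ and $a$ is $\mathcal H$-related in $S$ to $e$.
   Context: A transformation monoid is a subsemigroup of $T_n$ containing the identity map; $G=\{g\in S_n:g^{-1}Sg=S\}$ and $SG=\{sg:s\in S,g\in G\}$, a semigroup. In a semigroup $U$ (with $U^1$ denoting $U$ with an identity adjoined), $a\,\mathcal R\,b$ if $a=bu$, $b=av$ for some $u,v\in U^1$; $a\,\mathcal L\,b$ if $a=ub$, $b=va$ for some $u,v\in U^1$; and $a\,\mathcal H\,b$ if both $a\,\mathcal R\,b$ and $a\,\mathcal L\,b$. *)

theory Defs
  imports Main
begin

text \<open>Transformations of a finite set of n points are modelled as functions on a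
finite type 'a (so n = CARD('a)); the product of transformations is composition.\<close>

definition trans_monoid :: "('a::finite \<Rightarrow> 'a) set \<Rightarrow> bool" where
  "trans_monoid S \<longleftrightarrow> id \<in> S \<and> (\<forall>s\<in>S. \<forall>t\<in>S. s \<circ> t \<in> S)"

definition normalizer :: "('a::finite \<Rightarrow> 'a) set \<Rightarrow> ('a \<Rightarrow> 'a) set" where
  "normalizer S = {g. bij g \<and> (\<lambda>s. inv g \<circ> s \<circ> g) ` S = S}"

definition set_prod :: "('a \<Rightarrow> 'a) set \<Rightarrow> ('a \<Rightarrow> 'a) set \<Rightarrow> ('a \<Rightarrow> 'a) set" where
  "set_prod S G = {s \<circ> g | s g. s \<in> S \<and> g \<in> G}"

text \<open>Green's relations in a semigroup U of transformations, with U^1 = U plus an adjoined identity.\<close>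
definition R_rel :: "('a \<Rightarrow> 'a) set \<Rightarrow> ('a \<Rightarrow> 'a) \<Rightarrow> ('a \<Rightarrow> 'a) \<Rightarrow> bool" where
  "R_rel U a b \<longleftrightarrow> a \<in> U \<and> b \<in> U \<and>
     (a = b \<or> (\<exists>u\<in>U. a = b \<circ> u)) \<and> (b = a \<or> (\<exists>v\<in>U. b = a \<circ> v))"

definition L_rel :: "('a \<Rightarrow> 'a) set \<Rightarrow> ('a \<Rightarrow> 'a) \<Rightarrow> ('a \<Rightarrow> 'a) \<Rightarrow> bool" where
  "L_rel U a b \<longleftrightarrow> a \<in> U \<and> b \<in> U \<and>
     (a = b \<or> (\<exists>u\<in>U. a = u \<circ> b)) \<and> (b = a \<or> (\<exists>v\<in>U. b = v \<circ> a))"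

definition H_rel :: "('a \<Rightarrow> 'a) set \<Rightarrow> ('a \<Rightarrow> 'a) \<Rightarrow> ('a \<Rightarrow> 'a) \<Rightarrow> bool" where
  "H_rel U a b \<longleftrightarrow> R_rel U a b \<and> L_rel U a b"

end

theory Submission
  imports Defs
begin

lemma pow_in:
  assumes "trans_monoid S" "a \<in> S" shows "a ^^ n \<in> S"
  using assms by (induction n) (auto simp: trans_monoid_def)

lemma pow_e:
  fixes a e :: "'b \<Rightarrow> 'b"
  assumes "a \<circ> e = a" shows "a ^^ Suc n \<circ> e = a ^^ Suc n"
  by (simp only: funpow_Suc_right comp_assoc assms)

lemma pow_inv:
  fixes a e b :: "'b \<Rightarrow> 'b"
  assumes "a \<circ> e = a" "a \<circ> b = e" shows "a ^^ n \<circ> e \<circ> b ^^ n = e"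
proof (induction n)
  case 0 then show ?case by simp
next
  case (Suc n)
  have "a ^^ Suc n \<circ> e \<circ> b ^^ Suc n = (a \<circ> a ^^ n) \<circ> e \<circ> (b ^^ n \<circ> b)"
    by (subst funpow.simps(2), subst funpow_Suc_right, rule refl)
  also have "\<dots> = a \<circ> (a ^^ n \<circ> e \<circ> b ^^ n) \<circ> b"
    by (simp only: comp_assoc)
  also have "\<dots> = e" by (simp only: Suc assms)
  finally show ?case .
qed

lemma not_inj_pow: "\<not> inj (\<lambda>n::nat. (a::'a::finite \<Rightarrow> 'a) ^^ Suc n)"
proof
  assume "inj (\<lambda>n::nat. a ^^ Suc n)"
  moreover have "finite (range (\<lambda>n::nat. a ^^ Suc n))" by simp
  ultimately have "finite (UNIV::nat set)" using finite_imageD by blast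
  then show False by simp
qed

theorem lemma4p4:
  fixes S :: "('a::finite \<Rightarrow> 'a) set" and a e :: "'a \<Rightarrow> 'a"
  assumes "trans_monoid S"
    and "a \<in> S"
    and "e \<in> set_prod S (normalizer S)" and "e \<circ> e = e"
    and "H_rel (set_prod S (normalizer S)) a e"
  shows "e \<in> S \<and> H_rel S a e"
proof (cases "a = e")
  case True
  then show ?thesis using assms(2) by (auto simp: H_rel_def R_rel_def L_rel_def)
next
  case False
  let ?U = "set_prod S (normalizer S)"
  have HR: "R_rel ?U a e" "L_rel ?U a e" using assms(5) unfolding H_rel_def by auto
  have c1: "\<exists>u\<in>?U. a = e \<circ> u" "\<exists>v\<in>?U. e = a \<circ> v"
    using HR(1) False unfolding R_rel_def by simp_all
  have c2: "\<exists>u\<in>?U. a = u \<circ> e" "\<exists>v\<in>?U. e = v \<circ> a"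
    using HR(2) False unfolding L_rel_def by simp_all
  obtain u where h1: "a = e \<circ> u" using c1(1) by blast
  obtain v where h2: "e = a \<circ> v" using c1(2) by blast
  obtain u' where h3: "a = u' \<circ> e" using c2(1) by blast
  obtain w where h4: "e = w \<circ> a" using c2(2) by blast
  note h = h1 h2 h3 h4
  have ea: "e \<circ> a = a"
  proof -
    have "e \<circ> a = (e \<circ> e) \<circ> u" by (subst h(1)) (simp only: comp_assoc)
    also have "\<dots> = a" by (simp only: assms(4) h(1)[symmetric])
    finally show ?thesis .
  qed
  have ae: "a \<circ> e = a"
  proof -
    have "a \<circ> e = u' \<circ> (e \<circ> e)" by (subst h(3)) (simp only: comp_assoc)
    also have "\<dots> = a" by (simp only: assms(4) h(3)[symmetric])
    finally show ?thesis .
  qed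
  define b where "b = e \<circ> v \<circ> e"
  have ab: "a \<circ> b = e"
  proof -
    have "a \<circ> b = ((a \<circ> e) \<circ> v) \<circ> e" unfolding b_def by (simp only: comp_assoc)
    also have "\<dots> = e" by (simp only: ae h(2)[symmetric] assms(4))
    finally show ?thesis .
  qed
  have ba: "b \<circ> a = e"
  proof -
    have "b \<circ> a = e \<circ> v \<circ> (e \<circ> a)" unfolding b_def by (simp only: comp_assoc)
    also have "\<dots> = e \<circ> v \<circ> a" by (simp only: ea)
    also have "\<dots> = w \<circ> (a \<circ> v) \<circ> a" by (subst (1) h(4)) (simp only: comp_assoc)
    also have "\<dots> = w \<circ> a" by (simp only: h(2)[symmetric] comp_assoc ea)
    also have "\<dots> = e" by (simp only: h(4)[symmetric])
    finally show ?thesis .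
  qed
  obtain i j where ij: "i \<noteq> j" "a ^^ Suc i = a ^^ Suc j"
  proof -
    from not_inj_pow[of a] obtain i j where "(\<lambda>n::nat. a ^^ Suc n) i = (\<lambda>n::nat. a ^^ Suc n) j" "i \<noteq> j"
      unfolding inj_def by blast
    then show ?thesis using that by (simp only:)
  qed
  have key: "\<And>i j. i < j \<Longrightarrow> a ^^ Suc i = a ^^ Suc j \<Longrightarrow> \<exists>k. a ^^ Suc k = e"
  proof -
    fix i j :: nat assume ilj: "i < j" and eq: "a ^^ Suc i = a ^^ Suc j"
    have I: "a ^^ Suc i \<circ> b ^^ Suc i = e"
    proof -
      have "a ^^ Suc i \<circ> e \<circ> b ^^ Suc i = e" by (rule pow_inv[OF ae ab])
      thus ?thesis by (simp only: pow_e[OF ae])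
    qed
    obtain d where d: "j = Suc (i + d)" using less_imp_Suc_add[OF ilj] by (elim exE)
    have sj: "Suc j = Suc d + Suc i" using d by simp
    have "a ^^ Suc j = a ^^ Suc d \<circ> a ^^ Suc i"
      by (simp only: sj funpow_add)
    hence "a ^^ Suc i = a ^^ Suc d \<circ> a ^^ Suc i" using eq by (rule trans[rotated])
    hence "a ^^ Suc i \<circ> b ^^ Suc i = a ^^ Suc d \<circ> (a ^^ Suc i \<circ> b ^^ Suc i)"
      by (simp only: comp_assoc[symmetric])
    hence "e = a ^^ Suc d \<circ> e" by (simp only: I)
    hence "e = a ^^ Suc d" by (simp only: pow_e[OF ae])
    thus "\<exists>k. a ^^ Suc k = e" by (intro exI[of _ d]) (rule sym)
  qed
  obtain k where k: "a ^^ Suc k = e"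
  proof (cases "i < j")
    case True then show ?thesis using key ij(2) that by blast
  next
    case False then have "j < i" using ij(1) by simp
    then show ?thesis using key ij(2)[symmetric] that by blast
  qed
  have eS: "e \<in> S" using pow_in[OF assms(1,2), of "Suc k"] k by simp
  have kS: "a ^^ k \<in> S" using pow_in[OF assms(1,2)] .
  have r: "a \<circ> a ^^ k = e" using k by (simp only: funpow.simps(2))
  have l: "a ^^ k \<circ> a = e" using k by (simp only: funpow_Suc_right)
  have "R_rel S a e" unfolding R_rel_def using eS assms(2) kS r[symmetric] ea[symmetric] by blast
  moreover have "L_rel S a e" unfolding L_rel_def using eS assms(2) kS l[symmetric] ae[symmetric] by blast
  ultimately show ?thesis using eS unfolding H_rel_def by blast
qed

end
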